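(* Let $k$ be a positive integer, $\varphi:=2\max\{\psi,2\log|F|\}$, and $a\in[0,k)$. The restriction of the isomorphism $P:I_o/I(k\Psi)_o\to\mathcal{I}(k\varphi)_o/\mathcal{I}(k\varphi+k\Psi)_o$ to the submodule $I(a\Psi)_o/I(k\Psi)_o$ is an $\mathcal{O}_{\mathbb{C}^n,o}$-module isomorphism onto $\mathcal{I}(k\varphi+a\Psi)_o/\mathcal{I}(k\varphi+k\Psi)_o$.
   Context: Let $D\subset\mathbb{C}^n$ be a pseudoconvex domain containing the origin $o$, $F$ holomorphic on $D$, $\psi$ plurisubharmonic on $D$, $\Psi:=\min\{\psi-2\log|F|,0\}$ ($\Psi=0$ where $F=0$), $\{\Psi<-t\}:=\{z\in D:\Psi(z)<-t\}$. $J(\Psi)_o$: equivalence classes $g_o$ of functions $g$ holomorphic on $\{\Psi<-t\}\cap V$ ($V$ a neighborhood of $o$), with $g\sim h$ iff $g=h$ on $\{\Psi<-t\}\cap V$ for some $t\gg1$ and some neighborhood $V$ of $o$; an $\mathcal{O}_{\mathbb{C}^n,o}$-module. For $b\ge0$, $I(b\Psi)_o$ is the submodule of $g_o$ with $\int_{\{\Psi<-t\}\cap V}|g|^2e^{-b\Psi}<+\infty$ for some $t\gg1$, $V$; $I_o:=I(0\Psi)_o$. $\mathcal{I}(\phi)_o$ is the multiplier ideal of a plurisubharmonic $\phi$ at $o$. $P$ is defined by $P([f_o])=[(\tilde F,o)]$, where $(\tilde F,o)\in\mathcal{I}(k\varphi)_o$ is any germ with $\int_{\{\Psi<-t\}\cap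 D_0}|\tilde F-fF^{2k}|^2e^{-k\varphi-k\Psi}<+\infty$ for some $t>0$ and some neighborhood $D_0$ of $o$; it is a well-defined module isomorphism with inverse $[(\tilde F,o)]\mapsto[(\tilde F/F^{2k})_o]$. *)

theory Defs
  imports "HOL-Analysis.Analysis"
begin

text \<open>Points of C^n are vectors of type complex^'n; the origin o is 0.\<close>

definition holo_on :: "(complex^'n) set \<Rightarrow> (complex^'n \<Rightarrow> complex) \<Rightarrow> bool" where
  "holo_on S g \<longleftrightarrow> (\<forall>z\<in>S. \<exists>L. (g has_derivative L) (at z) \<and> (\<forall>c v. L (c *s v) = c * L v))"

definition eexp :: "ereal \<Rightarrow> ennreal" where
  "eexp x = (if x = \<infinity> then \<infinity> else if x = -\<infinity> then 0 else ennreal (exp (real_of_ereal x)))"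

definition usc_on :: "(complex^'n) set \<Rightarrow> (complex^'n \<Rightarrow> ereal) \<Rightarrow> bool" where
  "usc_on D u \<longleftrightarrow> (\<forall>z\<in>D. u z < \<infinity> \<and> (\<forall>c. u z < c \<longrightarrow> (\<forall>\<^sub>F y in at z within D. u y < c)))"

definition circle_mean :: "(complex^'n \<Rightarrow> ereal) \<Rightarrow> complex^'n \<Rightarrow> complex^'n \<Rightarrow> ereal" where
  "circle_mean u z w =
     (enn2ereal (\<integral>\<^sup>+ \<theta>\<in>{0..2*pi}. e2ennreal (max 0 (u (z + cis \<theta> *s w))) \<partial>lborel)
      - enn2ereal (\<integral>\<^sup>+ \<theta>\<in>{0..2*pi}. e2ennreal (max 0 (- u (z + cis \<theta> *s w))) \<partial>lborel))
     / ereal (2*pi)"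

definition psh_on :: "(complex^'n) set \<Rightarrow> (complex^'n \<Rightarrow> ereal) \<Rightarrow> bool" where
  "psh_on D u \<longleftrightarrow> usc_on D u \<and> (\<exists>z\<in>D. u z \<noteq> -\<infinity>) \<and>
     (\<forall>z w. (\<forall>\<zeta>::complex. cmod \<zeta> \<le> 1 \<longrightarrow> z + \<zeta> *s w \<in> D) \<longrightarrow> u z \<le> circle_mean u z w)"

definition pseudoconvex_domain :: "(complex^'n) set \<Rightarrow> bool" where
  "pseudoconvex_domain D \<longleftrightarrow> open D \<and> connected D \<and> D \<noteq> {} \<and>
     (\<exists>u::complex^'n \<Rightarrow> real. continuous_on D u \<and> psh_on D (\<lambda>z. ereal (u z)) \<and>
        (\<forall>c. compact (closure {z\<in>D. u z < c}) \<and> closure {z\<in>D. u z < c} \<subseteq> D))"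

definition elog_abs :: "(complex^'n \<Rightarrow> complex) \<Rightarrow> complex^'n \<Rightarrow> ereal" where
  "elog_abs F z = (if F z = 0 then -\<infinity> else ereal (ln (cmod (F z))))"

definition Psi :: "(complex^'n \<Rightarrow> ereal) \<Rightarrow> (complex^'n \<Rightarrow> complex) \<Rightarrow> complex^'n \<Rightarrow> ereal" where
  "Psi \<psi> F z = (if F z = 0 then 0 else min (\<psi> z - 2 * elog_abs F z) 0)"

definition phi :: "(complex^'n \<Rightarrow> ereal) \<Rightarrow> (complex^'n \<Rightarrow> complex) \<Rightarrow> complex^'n \<Rightarrow> ereal" where
  "phi \<psi> F z = 2 * max (\<psi> z) (2 * elog_abs F z)"

definition sublevel :: "(complex^'n) set \<Rightarrow> (complex^'n \<Rightarrow> ereal) \<Rightarrow> (complex^'n \<Rightarrow> complex) \<Rightarrow> real \<Rightarrow> (complex^'n) set" where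
  "sublevel D \<psi> F t = {z\<in>D. Psi \<psi> F z < ereal (- t)}"

definition germ_J :: "(complex^'n) set \<Rightarrow> (complex^'n \<Rightarrow> ereal) \<Rightarrow> (complex^'n \<Rightarrow> complex) \<Rightarrow> (complex^'n \<Rightarrow> complex) \<Rightarrow> bool" where
  "germ_J D \<psi> F g \<longleftrightarrow> (\<exists>t V. open V \<and> 0 \<in> V \<and> holo_on (sublevel D \<psi> F t \<inter> V) g)"

definition in_I_Psi :: "(complex^'n) set \<Rightarrow> (complex^'n \<Rightarrow> ereal) \<Rightarrow> (complex^'n \<Rightarrow> complex) \<Rightarrow> real \<Rightarrow> (complex^'n \<Rightarrow> complex) \<Rightarrow> bool" where
  "in_I_Psi D \<psi> F b g \<longleftrightarrow> (\<exists>t V. open V \<and> 0 \<in> V \<and>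
     (\<integral>\<^sup>+ z\<in>sublevel D \<psi> F t \<inter> V. ennreal ((cmod (g z))\<^sup>2) * eexp (- (ereal b * Psi \<psi> F z)) \<partial>lborel) < \<infinity>)"

definition in_mult_ideal :: "(complex^'n) set \<Rightarrow> (complex^'n \<Rightarrow> ereal) \<Rightarrow> (complex^'n \<Rightarrow> complex) \<Rightarrow> bool" where
  "in_mult_ideal D w g \<longleftrightarrow> (\<exists>U. open U \<and> 0 \<in> U \<and> holo_on U g \<and>
     (\<exists>V. open V \<and> 0 \<in> V \<and> V \<subseteq> U \<inter> D \<and>
        (\<integral>\<^sup>+ z\<in>V. ennreal ((cmod (g z))\<^sup>2) * eexp (- w z) \<partial>lborel) < \<infinity>))"

end

theory Submission
  imports Defs
begin


lemma sq_tri: "(cmod x)^2 \<le> 2 * (cmod (x - g))^2 + 2 * (cmod g)^2"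
proof -
  have "cmod x \<le> cmod (x - g) + cmod g" by (metis diff_add_cancel norm_triangle_ineq)
  then have "(cmod x)^2 \<le> (cmod (x - g) + cmod g)^2" by (simp add: power_mono)
  also have "\<dots> \<le> 2 * (cmod (x - g))^2 + 2 * (cmod g)^2"
    by (smt (verit) sum_squares_bound power2_sum)
  finally show ?thesis .
qed

lemma cmod_pow_exp: "w \<noteq> 0 \<Longrightarrow> (cmod (y * w ^ (2*k)))^2 = (cmod y)^2 * exp (real k * (4 * ln (cmod w)))"
proof -
  assume w: "w \<noteq> 0"
  have "cmod w = exp (ln (cmod w))" using w by simp
  then have "(cmod w) ^ (4*k) = exp (real k * (4 * ln (cmod w)))"
    by (metis exp_of_nat_mult mult.commute mult.left_commute of_nat_mult of_nat_numeral)
  moreover have "(cmod (y * w ^ (2*k)))^2 = (cmod y)^2 * (cmod w) ^ (4*k)"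
    by (simp add: norm_mult norm_power power_mult_distrib flip: power_mult) 
  ultimately show ?thesis by simp
qed

lemma core1:
  fixes x y w :: complex and k :: nat and a q :: real
  assumes "w \<noteq> 0" "q < 0" "0 \<le> a" "a < real k"
  defines "L \<equiv> ln (cmod w)"
  shows "(cmod x)^2 * exp (- (real k * (4*L)) - a * q) \<le>
     2 * ((cmod (x - y * w^(2*k)))^2 * exp (- (real k * (4*L)) - real k * q)) + 2 * ((cmod y)^2 * exp (- (a * q)))"
proof -
  define G where "G = y * w^(2*k)"
  have G: "(cmod G)^2 = (cmod y)^2 * exp (real k * (4*L))" unfolding G_def L_def using cmod_pow_exp assms(1) by blast
  have ee: "exp (real k * (4*L)) * exp (- (real k * (4*L)) - a * q) = exp (- (a * q))"
    by (simp add: exp_add[symmetric])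
  have e1: "exp (- (real k * (4*L)) - a * q) \<le> exp (- (real k * (4*L)) - real k * q)"
    using assms by (simp add: mult_right_mono_neg)
  have "(cmod x)^2 * exp (- (real k * (4*L)) - a * q) \<le> (2 * (cmod (x - G))^2 + 2 * (cmod G)^2) * exp (- (real k * (4*L)) - a * q)"
    by (intro mult_right_mono sq_tri) auto
  also have "\<dots> = 2 * ((cmod (x - G))^2 * exp (- (real k * (4*L)) - a * q)) + 2 * ((cmod y)^2 * exp (- (a * q)))"
    unfolding G ee[symmetric] by (simp add: algebra_simps)
  also have "\<dots> \<le> 2 * ((cmod (x - G))^2 * exp (- (real k * (4*L)) - real k * q)) + 2 * ((cmod y)^2 * exp (- (a * q)))"
    using e1 by (simp add: mult_left_mono)
  finally show ?thesis unfolding G_def .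
qed

lemma core2:
  fixes x y w :: complex and k :: nat and a q :: real
  assumes "w \<noteq> 0" "q < 0" "0 \<le> a" "a < real k"
  defines "L \<equiv> ln (cmod w)"
  shows "(cmod y)^2 * exp (- (a * q)) \<le>
     2 * ((cmod x)^2 * exp (- (real k * (4*L)) - a * q)) + 2 * ((cmod (x - y * w^(2*k)))^2 * exp (- (real k * (4*L)) - real k * q))"
proof -
  define G where "G = y * w^(2*k)"
  have G: "(cmod G)^2 = (cmod y)^2 * exp (real k * (4*L))" unfolding G_def L_def using cmod_pow_exp assms(1) by blast
  have ee: "exp (real k * (4*L)) * exp (- (real k * (4*L)) - a * q) = exp (- (a * q))"
    by (simp add: exp_add[symmetric])
  have e1: "exp (- (real k * (4*L)) - a * q) \<le> exp (- (real k * (4*L)) - real k * q)"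
    using assms by (simp add: mult_right_mono_neg)
  have "(cmod y)^2 * exp (- (a * q)) = (cmod G)^2 * exp (- (real k * (4*L)) - a * q)"
    unfolding G ee[symmetric] by (simp add: algebra_simps)
  also have "\<dots> \<le> (2 * (cmod (G - x))^2 + 2 * (cmod x)^2) * exp (- (real k * (4*L)) - a * q)"
    by (intro mult_right_mono sq_tri) auto
  also have "\<dots> = 2 * ((cmod x)^2 * exp (- (real k * (4*L)) - a * q)) + 2 * ((cmod (x - G))^2 * exp (- (real k * (4*L)) - a * q))"
    by (simp add: algebra_simps norm_minus_commute)
  also have "\<dots> \<le> 2 * ((cmod x)^2 * exp (- (real k * (4*L)) - a * q)) + 2 * ((cmod (x - G))^2 * exp (- (real k * (4*L)) - real k * q))"
    using e1 by (simp add: mult_left_mono)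
  finally show ?thesis unfolding G_def .
qed


lemma eexp_ereal[simp]: "eexp (ereal r) = ennreal (exp r)" by (simp add: eexp_def)
lemma eexp_inf[simp]: "eexp \<infinity> = top" by (simp add: eexp_def)
lemma eexp_zero[simp]: "eexp 0 = 1" by (simp add: eexp_def)
lemma eexp_minf[simp]: "eexp (-\<infinity>) = 0" by (simp add: eexp_def)

lemma pt1:
  fixes x y w :: complex and P :: ereal and k :: nat and a T :: real
  assumes w: "w \<noteq> 0" and P: "P < ereal (-T)" and T: "T > 0" and a: "0 \<le> a" "a < real k"
  defines "L \<equiv> ln (cmod w)"
  shows "ennreal ((cmod x)^2) * eexp (- (ereal (real k) * ereal (4*L) + ereal a * P)) \<le>
     2 * (ennreal ((cmod (x - y * w^(2*k)))^2) * eexp (- (ereal (real k) * ereal (4*L)) - ereal (real k) * P))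
     + 2 * (ennreal ((cmod y)^2) * eexp (- (ereal a * P)))" (is "_ \<le> ?rhs")
proof (cases P)
  case (real q)
  have q: "q < 0" using P T real by simp
  have c: "(cmod x)^2 * exp (- (real k * (4*L)) - a * q) \<le>
     2 * ((cmod (x - y * w^(2*k)))^2 * exp (- (real k * (4*L)) - real k * q)) + 2 * ((cmod y)^2 * exp (- (a * q)))"
    unfolding L_def by (rule core1[OF w q a])
  have "ennreal ((cmod x)^2 * exp (- (real k * (4*L)) - a * q)) \<le>
     ennreal (2 * ((cmod (x - y * w^(2*k)))^2 * exp (- (real k * (4*L)) - real k * q)) + 2 * ((cmod y)^2 * exp (- (a * q))))"
    using c by (rule ennreal_leI)
  moreover have "ennreal ((cmod x)^2) * eexp (- (ereal (real k) * ereal (4*L) + ereal a * P)) =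
      ennreal ((cmod x)^2 * exp (- (real k * (4*L)) - a * q))"
  proof -
    have "- (ereal (real k) * ereal (4*L) + ereal a * P) = ereal (- (real k * (4*L)) - a * q)"
      using real by simp
    then show ?thesis by (simp add: ennreal_mult)
  qed
  moreover have "2 * (ennreal ((cmod (x - y * w^(2*k)))^2) * eexp (- (ereal (real k) * ereal (4*L)) - ereal (real k) * P))
     + 2 * (ennreal ((cmod y)^2) * eexp (- (ereal a * P))) =
     ennreal (2 * ((cmod (x - y * w^(2*k)))^2 * exp (- (real k * (4*L)) - real k * q)) + 2 * ((cmod y)^2 * exp (- (a * q))))"
  proof -
    have e1: "- (ereal (real k) * ereal (4*L)) - ereal (real k) * P = ereal (- (real k * (4*L)) - real k * q)"
      using real by simp
    have e2: "- (ereal a * P) = ereal (- (a * q))" using real by simp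
    show ?thesis unfolding e1 e2 eexp_ereal
      by (subst ennreal_plus) (auto simp: ennreal_mult)
  qed
  ultimately show ?thesis by simp
next
  case PInf
  then show ?thesis using P by simp
next
  case MInf
  have kpos: "real k > 0" using a by simp
  have t1: "eexp (- (ereal (real k) * ereal (4*L)) - ereal (real k) * P) = top"
    using MInf kpos by simp
  show ?thesis
  proof (cases "a = 0")
    case True
    show ?thesis
    proof (cases "x = y * w^(2*k)")
      case True
      have "(cmod x)^2 * exp (- (real k * (4*L))) = (cmod y)^2"
        using cmod_pow_exp[OF w, of y k] True unfolding L_def by (simp add: mult.assoc flip: exp_add)
      moreover have "- (ereal (real k) * ereal (4*L) + ereal a * P) = ereal (- (real k * (4*L)))"
        using \<open>a = 0\<close> by (simp add: zero_ereal_def[symmetric])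
      ultimately have "ennreal ((cmod x)^2) * eexp (- (ereal (real k) * ereal (4*L) + ereal a * P)) = ennreal ((cmod y)^2)"
        by (simp add: ennreal_mult[symmetric])
      also have "\<dots> \<le> 2 * (ennreal ((cmod y)^2) * eexp (- (ereal a * P)))"
        using \<open>a = 0\<close> by (simp add: mult_2 zero_ereal_def[symmetric])
      also have "\<dots> \<le> ?rhs" by simp
      finally show ?thesis .
    next
      case False
      then have "ennreal ((cmod (x - y * w^(2*k)))^2) \<noteq> 0" by simp
      then have "2 * (ennreal ((cmod (x - y * w^(2*k)))^2) * eexp (- (ereal (real k) * ereal (4*L)) - ereal (real k) * P)) = top"
        using t1 by simp
      then show ?thesis by (simp add: add_top)
    qed
  next
    case False
    then have apos: "a > 0" using a by simp
    have t2: "eexp (- (ereal a * P)) = top" using MInf apos by simp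
    show ?thesis
    proof (cases "x = 0")
      case True then show ?thesis by simp
    next
      case False
      show ?thesis
      proof (cases "y = 0")
        case True
        then have "2 * (ennreal ((cmod (x - y * w^(2*k)))^2) * eexp (- (ereal (real k) * ereal (4*L)) - ereal (real k) * P)) = top"
          using t1 \<open>x \<noteq> 0\<close> by simp
        then show ?thesis by (simp add: add_top)
      next
        case False
        then have "2 * (ennreal ((cmod y)^2) * eexp (- (ereal a * P))) = top"
          using t2 by simp
        then show ?thesis by (simp add: add_top)
      qed
    qed
  qed
qed


lemma pt2:
  fixes x y w :: complex and P :: ereal and k :: nat and a T :: real
  assumes w: "w \<noteq> 0" and P: "P < ereal (-T)" and T: "T > 0" and a: "0 \<le> a" "a < real k"
  defines "L \<equiv> ln (cmod w)"
  shows "ennreal ((cmod y)^2) * eexp (- (ereal a * P)) \<le>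
     2 * (ennreal ((cmod x)^2) * eexp (- (ereal (real k) * ereal (4*L) + ereal a * P)))
     + 2 * (ennreal ((cmod (x - y * w^(2*k)))^2) * eexp (- (ereal (real k) * ereal (4*L)) - ereal (real k) * P))"
     (is "_ \<le> ?rhs")
proof (cases P)
  case (real q)
  have q: "q < 0" using P T real by simp
  have c: "(cmod y)^2 * exp (- (a * q)) \<le>
     2 * ((cmod x)^2 * exp (- (real k * (4*L)) - a * q)) + 2 * ((cmod (x - y * w^(2*k)))^2 * exp (- (real k * (4*L)) - real k * q))"
    unfolding L_def by (rule core2[OF w q a])
  have "ennreal ((cmod y)^2 * exp (- (a * q))) \<le>
     ennreal (2 * ((cmod x)^2 * exp (- (real k * (4*L)) - a * q)) + 2 * ((cmod (x - y * w^(2*k)))^2 * exp (- (real k * (4*L)) - real k * q)))"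
    using c by (rule ennreal_leI)
  moreover have "ennreal ((cmod y)^2) * eexp (- (ereal a * P)) = ennreal ((cmod y)^2 * exp (- (a * q)))"
  proof -
    have "- (ereal a * P) = ereal (- (a * q))" using real by simp
    then show ?thesis by (simp add: ennreal_mult)
  qed
  moreover have "?rhs =
     ennreal (2 * ((cmod x)^2 * exp (- (real k * (4*L)) - a * q)) + 2 * ((cmod (x - y * w^(2*k)))^2 * exp (- (real k * (4*L)) - real k * q)))"
  proof -
    have e1: "- (ereal (real k) * ereal (4*L)) - ereal (real k) * P = ereal (- (real k * (4*L)) - real k * q)"
      using real by simp
    have e2: "- (ereal (real k) * ereal (4*L) + ereal a * P) = ereal (- (real k * (4*L)) - a * q)"
      using real by simp
    show ?thesis unfolding e1 e2 eexp_ereal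
      by (subst ennreal_plus) (auto simp: ennreal_mult)
  qed
  ultimately show ?thesis by simp
next
  case PInf
  then show ?thesis using P by simp
next
  case MInf
  have kpos: "real k > 0" using a by simp
  have t1: "eexp (- (ereal (real k) * ereal (4*L)) - ereal (real k) * P) = top"
    using MInf kpos by simp
  show ?thesis
  proof (cases "a = 0")
    case True
    show ?thesis
    proof (cases "x = y * w^(2*k)")
      case True
      have "(cmod x)^2 * exp (- (real k * (4*L))) = (cmod y)^2"
        using cmod_pow_exp[OF w, of y k] True unfolding L_def by (simp add: mult.assoc flip: exp_add)
      moreover have "- (ereal (real k) * ereal (4*L) + ereal a * P) = ereal (- (real k * (4*L)))"
        using \<open>a = 0\<close> by (simp add: zero_ereal_def[symmetric])
      ultimately have "ennreal ((cmod x)^2) * eexp (- (ereal (real k) * ereal (4*L) + ereal a * P)) = ennreal ((cmod y)^2)"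
        by (simp add: ennreal_mult[symmetric])
      moreover have "ennreal ((cmod y)^2) * eexp (- (ereal a * P)) = ennreal ((cmod y)^2)"
        using \<open>a = 0\<close> by (simp add: zero_ereal_def[symmetric])
      ultimately have "ennreal ((cmod y)^2) * eexp (- (ereal a * P)) \<le> 2 * (ennreal ((cmod x)^2) * eexp (- (ereal (real k) * ereal (4*L) + ereal a * P)))"
        by (simp add: mult_2)
      also have "\<dots> \<le> ?rhs" by simp
      finally show ?thesis .
    next
      case False
      then have "ennreal ((cmod (x - y * w^(2*k)))^2) \<noteq> 0" by simp
      then have "2 * (ennreal ((cmod (x - y * w^(2*k)))^2) * eexp (- (ereal (real k) * ereal (4*L)) - ereal (real k) * P)) = top"
        using t1 by simp
      then show ?thesis by (simp add: add_top)
    qed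
  next
    case False
    then have apos: "a > 0" using a by simp
    have t2: "eexp (- (ereal (real k) * ereal (4*L) + ereal a * P)) = top" using MInf apos by simp
    show ?thesis
    proof (cases "y = 0")
      case True then show ?thesis by simp
    next
      case False
      show ?thesis
      proof (cases "x = 0")
        case True
        then have "x - y * w^(2*k) \<noteq> 0" using \<open>y \<noteq> 0\<close> w by simp
        then have "2 * (ennreal ((cmod (x - y * w^(2*k)))^2) * eexp (- (ereal (real k) * ereal (4*L)) - ereal (real k) * P)) = top"
          using t1 by simp
        then show ?thesis by (simp add: add_top)
      next
        case False
        then have "2 * (ennreal ((cmod x)^2) * eexp (- (ereal (real k) * ereal (4*L) + ereal a * P))) = top"
          using t2 by simp
        then show ?thesis by (simp add: add_top)
      qed
    qed
  qed
qed

lemma pt3: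
  fixes x :: complex and Q E :: ereal and a T :: real
  assumes Q: "ereal (-T) \<le> Q" "Q \<le> 0" and a: "0 \<le> a" and T: "0 \<le> T"
  shows "ennreal ((cmod x)^2) * eexp (- (E + ereal a * Q)) \<le> ennreal (exp (a*T)) * (ennreal ((cmod x)^2) * eexp (- E))"
proof -
  obtain q where q: "Q = ereal q" "-T \<le> q" "q \<le> 0" using Q by (cases Q) auto
  show ?thesis
  proof (cases E)
    case (real e)
    have "exp (- (e + a * q)) \<le> exp (a * T) * exp (- e)"
    proof -
      have "- (a * q) \<le> a * T" using q a mult_left_mono[of "-q" T a] by simp
      then have "exp (- (e + a * q)) \<le> exp (a * T + - e)" by simp
      also have "\<dots> = exp (a * T) * exp (- e)" by (rule exp_add)
      finally show ?thesis .
    qed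
    then have "ennreal (exp (- (e + a * q))) \<le> ennreal (exp (a * T)) * ennreal (exp (- e))"
      by (simp add: ennreal_leI flip: ennreal_mult)
    then have "ennreal ((cmod x)^2) * ennreal (exp (- (e + a * q))) \<le> ennreal ((cmod x)^2) * (ennreal (exp (a * T)) * ennreal (exp (- e)))"
      by (rule mult_left_mono) simp
    then show ?thesis using real q by (simp add: mult_ac)
  next
    case PInf
    then show ?thesis using q by simp
  next
    case MInf
    then show ?thesis using q by (cases "x = 0") simp_all
  qed
qed


lemma usc_meas:
  assumes "usc_on D \<psi>" "open D"
  shows "(\<lambda>z. if z \<in> D then \<psi> z else 0) \<in> borel_measurable borel"
proof (rule borel_measurableI_less)
  fix c :: ereal
  have op: "open {z\<in>D. \<psi> z < c}"
  proof (rule Topological_Spaces.openI)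
    fix z assume z: "z \<in> {z\<in>D. \<psi> z < c}"
    have u: "\<And>c. \<psi> z < c \<Longrightarrow> (\<forall>\<^sub>F y in at z within D. \<psi> y < c)"
      using assms(1) z unfolding usc_on_def by simp
    have "\<forall>\<^sub>F y in at z within D. \<psi> y < c" using z by (intro u) simp
    then have "\<forall>\<^sub>F y in at z. \<psi> y < c" using assms(2) z at_within_open[of z D] by simp
    then obtain S where S: "open S" "z \<in> S" "\<And>y. y \<in> S \<Longrightarrow> y \<noteq> z \<Longrightarrow> \<psi> y < c"
      unfolding eventually_at_topological by blast
    have "S \<inter> D \<subseteq> {z\<in>D. \<psi> z < c}" using S z by blast
    moreover have "open (S \<inter> D)" using S assms(2) by blast
    ultimately show "\<exists>T. open T \<and> z \<in> T \<and> T \<subseteq> {z\<in>D. \<psi> z < c}"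
      using S z by blast
  qed
  have "{x \<in> space borel. (if x \<in> D then \<psi> x else 0) < c} = {z\<in>D. \<psi> z < c} \<union> (if 0 < c then - D else {})"
    by (cases "0 < c") auto
  moreover have "- D \<in> sets borel" using assms(2) by auto
  ultimately show "{x \<in> space borel. (if x \<in> D then \<psi> x else 0) < c} \<in> sets borel"
    using op by auto
qed

lemma holo_cont: "holo_on S g \<Longrightarrow> continuous_on S g"
  unfolding holo_on_def
  by (meson continuous_at_imp_continuous_on has_derivative_continuous)

lemma eexp_meas[measurable]: "eexp \<in> borel_measurable borel"
  unfolding eexp_def
  apply (rule measurable_If)+
  by auto

lemma elog_meas[measurable]: "F \<in> borel_measurable M \<Longrightarrow> (\<lambda>z. elog_abs F z) \<in> borel_measurable M"
  unfolding elog_abs_def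
  apply (rule measurable_If) by auto

lemma Psi_meas[measurable]: "F \<in> borel_measurable M \<Longrightarrow> \<psi> \<in> borel_measurable M \<Longrightarrow> (\<lambda>z. Psi \<psi> F z) \<in> borel_measurable M"
  unfolding Psi_def
  apply (rule measurable_If) by auto

lemma phi_meas[measurable]: "F \<in> borel_measurable M \<Longrightarrow> \<psi> \<in> borel_measurable M \<Longrightarrow> (\<lambda>z. phi \<psi> F z) \<in> borel_measurable M"
  unfolding phi_def by auto

lemma Psi_pt: "\<psi>' z = \<psi> z \<Longrightarrow> F' z = F z \<Longrightarrow> Psi \<psi>' F' z = Psi \<psi> F z"
  by (simp add: Psi_def elog_abs_def)

lemma phi_pt: "\<psi>' z = \<psi> z \<Longrightarrow> F' z = F z \<Longrightarrow> phi \<psi>' F' z = phi \<psi> F z"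
  by (simp add: phi_def elog_abs_def)

lemma meas_int:
  fixes P P' :: "complex^'n \<Rightarrow> complex" and E E' :: "complex^'n \<Rightarrow> ereal"
  assumes "P \<in> borel_measurable borel" "E \<in> borel_measurable borel" "A \<in> sets borel"
    and "\<And>z. z \<in> A \<Longrightarrow> P' z = P z" "\<And>z. z \<in> A \<Longrightarrow> E' z = E z"
  shows "(\<lambda>z. ennreal ((cmod (P' z))^2) * eexp (E' z) * indicator A z) \<in> borel_measurable lborel"
proof -
  have "(\<lambda>z. ennreal ((cmod (P' z))^2) * eexp (E' z) * indicator A z) =
        (\<lambda>z. ennreal ((cmod (P z))^2) * eexp (E z) * indicator A z)"
    using assms(4,5) by (auto simp: fun_eq_iff split: split_indicator)
  moreover have "(\<lambda>z. ennreal ((cmod (P z))^2) * eexp (E z) * indicator A z) \<in> borel_measurable borel"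
    using assms(1-3) by measurable
  ultimately show ?thesis by simp
qed

lemma sub_facts:
  assumes "Psi \<psi> F z < ereal (-T)" "T > 0"
  shows "F z \<noteq> 0" "phi \<psi> F z = ereal (4 * ln (cmod (F z)))"
proof -
  show F: "F z \<noteq> 0" using assms by (auto simp: Psi_def)
  have "min (\<psi> z - 2 * ereal (ln (cmod (F z)))) 0 < ereal (-T)"
    using assms F by (simp add: Psi_def elog_abs_def)
  then have "\<psi> z - 2 * ereal (ln (cmod (F z))) < ereal (-T)" using assms(2)
    by (auto simp: min_def split: if_splits)
  then have "\<psi> z \<le> 2 * ereal (ln (cmod (F z)))" using assms(2)
    by (cases "\<psi> z") auto
  then show "phi \<psi> F z = ereal (4 * ln (cmod (F z)))"
    using F by (simp add: phi_def elog_abs_def max_def)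
qed

lemma Psi_le0: "Psi \<psi> F z \<le> 0" by (simp add: Psi_def)

lemma sub_mono: "t \<le> T \<Longrightarrow> sublevel D \<psi> F T \<subseteq> sublevel D \<psi> F t"
  unfolding sublevel_def by (auto intro: order.strict_trans2)



theorem lemma2p6:
  fixes D :: "(complex^'n) set" and F f Ft :: "complex^'n \<Rightarrow> complex"
    and \<psi> :: "complex^'n \<Rightarrow> ereal" and k :: nat and a :: real
  assumes "pseudoconvex_domain D" and "0 \<in> D"
    and "holo_on D F" and "psh_on D \<psi>"
    and "k > 0" and "0 \<le> a" and "a < real k"
    \<comment> \<open>[f_o] \<in> I_o\<close>
    and "germ_J D \<psi> F f" and "in_I_Psi D \<psi> F 0 f"
    \<comment> \<open>(Ft,o) \<in> \<I>(k\<phi>)_o represents P([f_o])\<close>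
    and "in_mult_ideal D (\<lambda>z. ereal (real k) * phi \<psi> F z) Ft"
    and "\<exists>t>0. \<exists>D0. open D0 \<and> 0 \<in> D0 \<and>
          (\<integral>\<^sup>+ z\<in>sublevel D \<psi> F t \<inter> D0.
             ennreal ((cmod (Ft z - f z * F z ^ (2*k)))\<^sup>2)
             * eexp (- (ereal (real k) * phi \<psi> F z) - ereal (real k) * Psi \<psi> F z) \<partial>lborel) < \<infinity>"
  shows "in_I_Psi D \<psi> F a f \<longleftrightarrow>
         in_mult_ideal D (\<lambda>z. ereal (real k) * phi \<psi> F z + ereal a * Psi \<psi> F z) Ft"
proof -
  have oD: "open D" using assms(1) by (simp add: pseudoconvex_domain_def)
  have Db: "D \<in> sets borel" using oD by simp
  define \<psi>D where "\<psi>D = (\<lambda>z. if z \<in> D then \<psi> z else 0)"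
  have \<psi>D_m[measurable]: "\<psi>D \<in> borel_measurable borel" unfolding \<psi>D_def
    using usc_meas[OF _ oD] assms(4) by (simp add: psh_on_def)
  define FD where "FD = (\<lambda>z. indicator D z *\<^sub>R F z)"
  have FD_m[measurable]: "FD \<in> borel_measurable borel" unfolding FD_def
    using borel_measurable_continuous_on_indicator[OF Db holo_cont[OF assms(3)]] .
  have eqD: "Psi \<psi>D FD z = Psi \<psi> F z" "phi \<psi>D FD z = phi \<psi> F z" "FD z = F z" if "z \<in> D" for z
    using that by (auto simp: \<psi>D_def FD_def intro!: Psi_pt phi_pt)
  have subB: "sublevel D \<psi> F t \<in> sets borel" for t
  proof -
    have "sublevel D \<psi> F t = {z \<in> space borel. Psi \<psi>D FD z < ereal (-t)} \<inter> D"
      unfolding sublevel_def using eqD by auto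
    also have "\<dots> \<in> sets borel" using Db by measurable
    finally show ?thesis .
  qed
  obtain tg Vg where Vg: "open Vg" "0 \<in> Vg" "holo_on (sublevel D \<psi> F tg \<inter> Vg) f"
    using assms(8) unfolding germ_J_def by blast
  define Sg where "Sg = sublevel D \<psi> F tg \<inter> Vg"
  have Sgb: "Sg \<in> sets borel" unfolding Sg_def using subB Vg(1) by auto
  define fS where "fS = (\<lambda>z. indicator Sg z *\<^sub>R f z)"
  have fS_m[measurable]: "fS \<in> borel_measurable borel" unfolding fS_def
    using borel_measurable_continuous_on_indicator[OF Sgb holo_cont] Vg(3) Sg_def by blast
  obtain t2 D0 where D0: "t2 > 0" "open D0" "0 \<in> D0" and I2:
    "(\<integral>\<^sup>+ z\<in>sublevel D \<psi> F t2 \<inter> D0.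
             ennreal ((cmod (Ft z - f z * F z ^ (2*k)))\<^sup>2)
             * eexp (- (ereal (real k) * phi \<psi> F z) - ereal (real k) * Psi \<psi> F z) \<partial>lborel) < \<infinity>"
    using assms(11) by blast
  show ?thesis
  proof
    assume "in_I_Psi D \<psi> F a f"
    then obtain t1 V1 where V1: "open V1" "0 \<in> V1" and I1:
      "(\<integral>\<^sup>+ z\<in>sublevel D \<psi> F t1 \<inter> V1. ennreal ((cmod (f z))\<^sup>2) * eexp (- (ereal a * Psi \<psi> F z)) \<partial>lborel) < \<infinity>"
      unfolding in_I_Psi_def by blast
    obtain U V3 where U: "open U" "0 \<in> U" "holo_on U Ft" "open V3" "0 \<in> V3" "V3 \<subseteq> U \<inter> D" and I3:
      "(\<integral>\<^sup>+ z\<in>V3. ennreal ((cmod (Ft z))\<^sup>2) * eexp (- (ereal (real k) * phi \<psi> F z)) \<partial>lborel) < \<infinity>"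
      using assms(10) unfolding in_mult_ideal_def by blast
    define T where "T = max (max tg t1) t2"
    have T: "T > 0" "tg \<le> T" "t1 \<le> T" "t2 \<le> T" using D0(1) unfolding T_def by auto
    define W where "W = Vg \<inter> V1 \<inter> D0 \<inter> V3"
    have W: "open W" "0 \<in> W" "W \<subseteq> U \<inter> D" using Vg V1 D0 U unfolding W_def by auto
    define S where "S = sublevel D \<psi> F T \<inter> W"
    have Sb: "S \<in> sets borel" unfolding S_def using subB W(1) by auto
    have S_sub: "S \<subseteq> Sg" "S \<subseteq> sublevel D \<psi> F t2 \<inter> D0" "S \<subseteq> sublevel D \<psi> F t1 \<inter> V1" "S \<subseteq> W"
      using sub_mono[OF T(2), of D \<psi> F] sub_mono[OF T(3), of D \<psi> F] sub_mono[OF T(4), of D \<psi> F]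
      unfolding S_def Sg_def W_def by auto
    define FtU where "FtU = (\<lambda>z. indicator U z *\<^sub>R Ft z)"
    have FtU_m[measurable]: "FtU \<in> borel_measurable borel" unfolding FtU_def
      using borel_measurable_continuous_on_indicator[OF _ holo_cont[OF U(3)]] U(1) by simp
    have FtUeq: "FtU z = Ft z" if "z \<in> U" for z using that unfolding FtU_def by simp
    have mm1: "(\<lambda>z. FtU z - fS z * FD z ^ (2*k)) \<in> borel_measurable borel" by measurable
    have mm2: "(\<lambda>z. - (ereal (real k) * phi \<psi>D FD z) - ereal (real k) * Psi \<psi>D FD z) \<in> borel_measurable borel" by measurable
    have mm3: "(\<lambda>z. - (ereal (real k) * phi \<psi>D FD z)) \<in> borel_measurable borel" by measurable
    have mm4: "(\<lambda>z. - (ereal a * Psi \<psi>D FD z)) \<in> borel_measurable borel" by measurable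
    define g0 where "g0 = (\<lambda>z. ennreal ((cmod (Ft z))\<^sup>2) * eexp (- (ereal (real k) * phi \<psi> F z + ereal a * Psi \<psi> F z)))"
    define g1 where "g1 = (\<lambda>z. ennreal ((cmod (f z))\<^sup>2) * eexp (- (ereal a * Psi \<psi> F z)))"
    define g2 where "g2 = (\<lambda>z. ennreal ((cmod (Ft z - f z * F z ^ (2*k)))\<^sup>2)
             * eexp (- (ereal (real k) * phi \<psi> F z) - ereal (real k) * Psi \<psi> F z))"
    define g3 where "g3 = (\<lambda>z. ennreal ((cmod (Ft z))\<^sup>2) * eexp (- (ereal (real k) * phi \<psi> F z)))"
    have inS: "z \<in> D" "z \<in> U" "fS z = f z" "z \<in> W" if "z \<in> S" for z
      using that S_sub W(3) unfolding fS_def by auto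
    have m1: "(\<lambda>z. g1 z * indicator S z) \<in> borel_measurable lborel" unfolding g1_def
      by (rule meas_int[of fS "\<lambda>z. - (ereal a * Psi \<psi>D FD z)"]) (use Sb inS eqD mm4 in auto)
    have m2: "(\<lambda>z. g2 z * indicator S z) \<in> borel_measurable lborel" unfolding g2_def
      by (rule meas_int[of "\<lambda>z. FtU z - fS z * FD z ^ (2*k)" "\<lambda>z. - (ereal (real k) * phi \<psi>D FD z) - ereal (real k) * Psi \<psi>D FD z"])
         (use Sb inS eqD mm1 mm2 FtUeq in auto)
    have m3: "(\<lambda>z. g3 z * indicator W z) \<in> borel_measurable lborel" unfolding g3_def
      by (rule meas_int[of FtU "\<lambda>z. - (ereal (real k) * phi \<psi>D FD z)"]) (use W eqD mm3 FtUeq in auto)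
    have pw: "g0 z * indicator W z \<le> ennreal (exp (a*T)) * (g3 z * indicator W z) + 2 * (g2 z * indicator S z) + 2 * (g1 z * indicator S z)" for z
    proof (cases "z \<in> W")
      case False then show ?thesis by simp
    next
      case True
      show ?thesis
      proof (cases "z \<in> S")
        case True
        then have ps: "Psi \<psi> F z < ereal (-T)" unfolding S_def sublevel_def by auto
        have "g0 z \<le> 2 * g2 z + 2 * g1 z"
          unfolding g0_def g1_def g2_def sub_facts(2)[OF ps T(1)]
          by (rule pt1[OF sub_facts(1)[OF ps T(1)] ps T(1) assms(6,7)])
        moreover have "2 * g2 z + 2 * g1 z \<le> ennreal (exp (a*T)) * g3 z + (2 * g2 z + 2 * g1 z)"
          by (rule add_increasing) auto
        ultimately have "g0 z \<le> ennreal (exp (a*T)) * g3 z + (2 * g2 z + 2 * g1 z)" by (rule order_trans)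
        then show ?thesis using True \<open>z \<in> W\<close> by (simp add: add.assoc)
      next
        case False
        then have ps: "ereal (-T) \<le> Psi \<psi> F z" using \<open>z \<in> W\<close> W(3) unfolding S_def sublevel_def by auto
        have "g0 z \<le> ennreal (exp (a*T)) * g3 z"
          unfolding g0_def g3_def by (rule pt3[OF ps Psi_le0 assms(6)]) (use T in simp)
        then show ?thesis using False \<open>z \<in> W\<close> by (simp add: add_increasing2)
      qed
    qed
    have "(\<integral>\<^sup>+ z\<in>W. g0 z \<partial>lborel) \<le> (\<integral>\<^sup>+ z. ennreal (exp (a*T)) * (g3 z * indicator W z) + 2 * (g2 z * indicator S z) + 2 * (g1 z * indicator S z) \<partial>lborel)"
      by (rule nn_integral_mono) (rule pw)
    also have "\<dots> = ennreal (exp (a*T)) * (\<integral>\<^sup>+ z\<in>W. g3 z \<partial>lborel) + 2 * (\<integral>\<^sup>+ z\<in>S. g2 z \<partial>lborel) + 2 * (\<integral>\<^sup>+ z\<in>S. g1 z \<partial>lborel)"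
      using m1 m2 m3 by (simp add: nn_integral_add nn_integral_cmult)
    also have "\<dots> < \<infinity>"
    proof -
      have "(\<integral>\<^sup>+ z\<in>W. g3 z \<partial>lborel) \<le> (\<integral>\<^sup>+ z\<in>V3. g3 z \<partial>lborel)"
        using W_def by (intro nn_integral_mono) (auto split: split_indicator)
      then have a3: "(\<integral>\<^sup>+ z\<in>W. g3 z \<partial>lborel) < \<infinity>" using I3 unfolding g3_def by simp
      have "(\<integral>\<^sup>+ z\<in>S. g2 z \<partial>lborel) \<le> (\<integral>\<^sup>+ z\<in>sublevel D \<psi> F t2 \<inter> D0. g2 z \<partial>lborel)"
        using S_sub(2) by (intro nn_integral_mono) (auto split: split_indicator)
      then have a2: "(\<integral>\<^sup>+ z\<in>S. g2 z \<partial>lborel) < \<infinity>" using I2 unfolding g2_def by simp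
      have "(\<integral>\<^sup>+ z\<in>S. g1 z \<partial>lborel) \<le> (\<integral>\<^sup>+ z\<in>sublevel D \<psi> F t1 \<inter> V1. g1 z \<partial>lborel)"
        using S_sub(3) by (intro nn_integral_mono) (auto split: split_indicator)
      then have a1: "(\<integral>\<^sup>+ z\<in>S. g1 z \<partial>lborel) < \<infinity>" using I1 unfolding g1_def by simp
      show ?thesis using a1 a2 a3 by (simp add: ennreal_mult_less_top less_top)
    qed
    finally have "(\<integral>\<^sup>+ z\<in>W. g0 z \<partial>lborel) < \<infinity>" .
    then show "in_mult_ideal D (\<lambda>z. ereal (real k) * phi \<psi> F z + ereal a * Psi \<psi> F z) Ft"
      unfolding in_mult_ideal_def g0_def using U W by blast

  next
    assume "in_mult_ideal D (\<lambda>z. ereal (real k) * phi \<psi> F z + ereal a * Psi \<psi> F z) Ft"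
    then obtain U V3 where U: "open U" "0 \<in> U" "holo_on U Ft" "open V3" "0 \<in> V3" "V3 \<subseteq> U \<inter> D" and I3:
      "(\<integral>\<^sup>+ z\<in>V3. ennreal ((cmod (Ft z))\<^sup>2) * eexp (- (ereal (real k) * phi \<psi> F z + ereal a * Psi \<psi> F z)) \<partial>lborel) < \<infinity>"
      unfolding in_mult_ideal_def by blast
    define T where "T = max tg t2"
    have T: "T > 0" "tg \<le> T" "t2 \<le> T" using D0(1) unfolding T_def by auto
    define W where "W = Vg \<inter> D0 \<inter> V3"
    have W: "open W" "0 \<in> W" "W \<subseteq> U \<inter> D" using Vg D0 U unfolding W_def by auto
    define S where "S = sublevel D \<psi> F T \<inter> W"
    have Sb: "S \<in> sets borel" unfolding S_def using subB W(1) by auto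
    have S_sub: "S \<subseteq> Sg" "S \<subseteq> sublevel D \<psi> F t2 \<inter> D0" "S \<subseteq> V3"
      using sub_mono[OF T(2), of D \<psi> F] sub_mono[OF T(3), of D \<psi> F]
      unfolding S_def Sg_def W_def by auto
    define FtU where "FtU = (\<lambda>z. indicator U z *\<^sub>R Ft z)"
    have FtU_m[measurable]: "FtU \<in> borel_measurable borel" unfolding FtU_def
      using borel_measurable_continuous_on_indicator[OF _ holo_cont[OF U(3)]] U(1) by simp
    have FtUeq: "FtU z = Ft z" if "z \<in> U" for z using that unfolding FtU_def by simp
    have mm1: "(\<lambda>z. FtU z - fS z * FD z ^ (2*k)) \<in> borel_measurable borel" by measurable
    have mm2: "(\<lambda>z. - (ereal (real k) * phi \<psi>D FD z) - ereal (real k) * Psi \<psi>D FD z) \<in> borel_measurable borel" by measurable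
    have mm3: "(\<lambda>z. - (ereal (real k) * phi \<psi>D FD z + ereal a * Psi \<psi>D FD z)) \<in> borel_measurable borel" by measurable
    define g0 where "g0 = (\<lambda>z. ennreal ((cmod (Ft z))\<^sup>2) * eexp (- (ereal (real k) * phi \<psi> F z + ereal a * Psi \<psi> F z)))"
    define g1 where "g1 = (\<lambda>z. ennreal ((cmod (f z))\<^sup>2) * eexp (- (ereal a * Psi \<psi> F z)))"
    define g2 where "g2 = (\<lambda>z. ennreal ((cmod (Ft z - f z * F z ^ (2*k)))\<^sup>2)
             * eexp (- (ereal (real k) * phi \<psi> F z) - ereal (real k) * Psi \<psi> F z))"
    have inS: "z \<in> D" "z \<in> U" "fS z = f z" if "z \<in> S" for z
      using that S_sub W(3) unfolding fS_def S_def by auto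
    have m0: "(\<lambda>z. g0 z * indicator S z) \<in> borel_measurable lborel" unfolding g0_def
      by (rule meas_int[of FtU "\<lambda>z. - (ereal (real k) * phi \<psi>D FD z + ereal a * Psi \<psi>D FD z)"])
         (use Sb inS eqD mm3 FtUeq in auto)
    have m2: "(\<lambda>z. g2 z * indicator S z) \<in> borel_measurable lborel" unfolding g2_def
      by (rule meas_int[of "\<lambda>z. FtU z - fS z * FD z ^ (2*k)" "\<lambda>z. - (ereal (real k) * phi \<psi>D FD z) - ereal (real k) * Psi \<psi>D FD z"])
         (use Sb inS eqD mm1 mm2 FtUeq in auto)
    have pw: "g1 z * indicator S z \<le> 2 * (g0 z * indicator S z) + 2 * (g2 z * indicator S z)" for z
    proof (cases "z \<in> S")
      case False then show ?thesis by simp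
    next
      case True
      then have ps: "Psi \<psi> F z < ereal (-T)" unfolding S_def sublevel_def by auto
      have "g1 z \<le> 2 * g0 z + 2 * g2 z"
        unfolding g0_def g1_def g2_def sub_facts(2)[OF ps T(1)]
        by (rule pt2[OF sub_facts(1)[OF ps T(1)] ps T(1) assms(6,7)])
      then show ?thesis using True by simp
    qed
    have "(\<integral>\<^sup>+ z\<in>S. g1 z \<partial>lborel) \<le> (\<integral>\<^sup>+ z. 2 * (g0 z * indicator S z) + 2 * (g2 z * indicator S z) \<partial>lborel)"
      by (rule nn_integral_mono) (rule pw)
    also have "\<dots> = 2 * (\<integral>\<^sup>+ z\<in>S. g0 z \<partial>lborel) + 2 * (\<integral>\<^sup>+ z\<in>S. g2 z \<partial>lborel)"
      using m0 m2 by (simp add: nn_integral_add nn_integral_cmult)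
    also have "\<dots> < \<infinity>"
    proof -
      have "(\<integral>\<^sup>+ z\<in>S. g0 z \<partial>lborel) \<le> (\<integral>\<^sup>+ z\<in>V3. g0 z \<partial>lborel)"
        using S_sub(3) by (intro nn_integral_mono) (auto split: split_indicator)
      then have a0: "(\<integral>\<^sup>+ z\<in>S. g0 z \<partial>lborel) < \<infinity>" using I3 unfolding g0_def by simp
      have "(\<integral>\<^sup>+ z\<in>S. g2 z \<partial>lborel) \<le> (\<integral>\<^sup>+ z\<in>sublevel D \<psi> F t2 \<inter> D0. g2 z \<partial>lborel)"
        using S_sub(2) by (intro nn_integral_mono) (auto split: split_indicator)
      then have a2: "(\<integral>\<^sup>+ z\<in>S. g2 z \<partial>lborel) < \<infinity>" using I2 unfolding g2_def by simp
      show ?thesis using a0 a2 by (simp add: ennreal_mult_less_top less_top)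
    qed
    finally have "(\<integral>\<^sup>+ z\<in>S. g1 z \<partial>lborel) < \<infinity>" .
    then show "in_I_Psi D \<psi> F a f"
      unfolding in_I_Psi_def g1_def S_def using W by blast
  qed
qed

end
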